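(* Let $k\ge1$, $\lambda>0$, $0<\theta<1$, and $F(x,y,\theta)=\frac{1+x+\theta y}{1+x+y}$. Define sequences by $z^-_{1,1}=z^-_{2,1}=\lambda\theta^k$, $z^+_{1,1}=z^+_{2,1}=\lambda$ and $$z^-_{1,n+1}=\lambda F(z^-_{1,n},z^+_{2,n},\theta)^k,\ z^+_{1,n+1}=\lambda F(z^+_{1,n},z^-_{2,n},\theta)^k,\ z^-_{2,n+1}=\lambda F(z^-_{2,n},z^+_{1,n},\theta)^k,\ z^+_{2,n+1}=\lambda F(z^+_{2,n},z^-_{1,n},\theta)^k.$$ Then the limits $z^\pm_j=\lim_{n\to\infty}z^\pm_{j,n}$ ($j=1,2$) exist, the vector $(z^-_1,z^+_1,z^-_2,z^+_2)$ solves $$z^-_1=\lambda F(z^-_1,z^+_2,\theta)^k,\ z^+_1=\lambda F(z^+_1,z^-_2,\theta)^k,\ z^-_2=\lambda F(z^-_2,z^+_1,\theta)^k,\ z^+_2=\lambda F(z^+_2,z^-_1,\theta)^k,\quad ( * )$$ and every family $(z_{1,i},z_{2,i})_{i\in\mathbb{T}^k}$ of positive numbers satisfying, for all $i\in\mathbb{T}^k$, $$z_{1,i}=\lambda\prod_{j\in S(i)}F(z_{1,j},z_{2,j},\theta),\qquad z_{2,i}=\lambda\prod_{j\in S(i)}F(z_{2,j},z_{1,j},\theta)\quad ( ** )$$ satisfies $z^-_j\le z_{j,i}\le z^+_j$ for $j=1,2$ and all $i\in\mathbb{T}^k$.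
   Context: $\mathbb{T}^k$ is the rooted Cayley tree of order $k$ and $S(i)$ denotes the set of the $k$ direct successors of a vertex $i$ (neighbours of $i$ one step further from the root). System ( ** ) is the exponentiated form (with $z_{1,i}=e^{\tilde h_{+,i}}$, $z_{2,i}=e^{\tilde h_{-,i}}$) of the compatibility equations for splitting Gibbs measures of the Soft-Core Widom–Rowlinson model. *)

theory Defs
  imports Complex_Main
begin

definition F :: "real \<Rightarrow> real \<Rightarrow> real \<Rightarrow> real" where
  "F x y \<theta> = (1 + x + \<theta> * y) / (1 + x + y)"

text \<open>zseq lam th k n = (z^-_{1,n+1}, z^+_{1,n+1}, z^-_{2,n+1}, z^+_{2,n+1}) (shift by one:
  index 0 here corresponds to index 1 in the paper).\<close>
fun zseq :: "real \<Rightarrow> real \<Rightarrow> nat \<Rightarrow> nat \<Rightarrow> real \<times> real \<times> real \<times> real" where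
  "zseq lam th k 0 = (lam * th ^ k, lam, lam * th ^ k, lam)"
| "zseq lam th k (Suc n) =
     (case zseq lam th k n of (a, b, c, d) \<Rightarrow>
       (lam * F a d th ^ k, lam * F b c th ^ k, lam * F c b th ^ k, lam * F d a th ^ k))"

definition zm1 :: "real \<Rightarrow> real \<Rightarrow> nat \<Rightarrow> nat \<Rightarrow> real" where
  "zm1 lam th k n = fst (zseq lam th k n)"
definition zp1 :: "real \<Rightarrow> real \<Rightarrow> nat \<Rightarrow> nat \<Rightarrow> real" where
  "zp1 lam th k n = fst (snd (zseq lam th k n))"
definition zm2 :: "real \<Rightarrow> real \<Rightarrow> nat \<Rightarrow> nat \<Rightarrow> real" where
  "zm2 lam th k n = fst (snd (snd (zseq lam th k n)))"
definition zp2 :: "real \<Rightarrow> real \<Rightarrow> nat \<Rightarrow> nat \<Rightarrow> real" where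
  "zp2 lam th k n = snd (snd (snd (zseq lam th k n)))"

text \<open>Rooted Cayley tree of order k: vertices are finite words over {0..<k}
  (the root is the empty word); the direct successors of i are m # i, m < k.\<close>
definition tree_vertices :: "nat \<Rightarrow> nat list set" where
  "tree_vertices k = {xs. \<forall>m \<in> set xs. m < k}"

definition succs :: "nat \<Rightarrow> nat list \<Rightarrow> nat list set" where
  "succs k i = {m # i | m. m < k}"

end

theory Submission
  imports Defs
begin

lemma F_mono:
  assumes "0 \<le> x" "x \<le> x'" "0 \<le> y'" "y' \<le> y" "0 \<le> th" "th \<le> 1"
  shows "F x y th \<le> F x' y' th"
proof -
  have d1: "1 + x + y > 0" "1 + x' + y' > 0" using assms by auto
  have "y' * (1 + x + y) \<le> y * (1 + x' + y')"
  proof -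
    have "y' * x \<le> y * x'" using assms by (simp add: mult_mono)
    moreover have "y' \<le> y" using assms by simp
    ultimately show ?thesis by (simp add: algebra_simps)
  qed
  hence "y' / (1 + x' + y') \<le> y / (1 + x + y)" using d1 by (simp add: divide_simps)
  hence "(1 - th) * (y' / (1 + x' + y')) \<le> (1 - th) * (y / (1 + x + y))"
    by (rule mult_left_mono) (use assms in auto)
  moreover have "F x y th = 1 - (1 - th) * (y / (1 + x + y))"
    using d1 unfolding F_def by (simp add: field_simps)
  moreover have "F x' y' th = 1 - (1 - th) * (y' / (1 + x' + y'))"
    using d1 unfolding F_def by (simp add: field_simps)
  ultimately show ?thesis by linarith
qed

lemma F_bounds:
  assumes "0 \<le> x" "0 \<le> y" "0 < th" "th < 1"
  shows "th \<le> F x y th" "F x y th \<le> 1"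
proof -
  have d: "1 + x + y > 0" using assms by auto
  have "th * x \<le> x" using assms by (simp add: mult_left_le_one_le)
  then show "th \<le> F x y th" unfolding F_def using d assms
    by (simp add: divide_simps algebra_simps)
  show "F x y th \<le> 1" unfolding F_def using d assms
    by (simp add: divide_simps) (simp add: mult_left_le_one_le)
qed

lemma zrec:
  "zm1 lam th k (Suc n) = lam * F (zm1 lam th k n) (zp2 lam th k n) th ^ k"
  "zp1 lam th k (Suc n) = lam * F (zp1 lam th k n) (zm2 lam th k n) th ^ k"
  "zm2 lam th k (Suc n) = lam * F (zm2 lam th k n) (zp1 lam th k n) th ^ k"
  "zp2 lam th k (Suc n) = lam * F (zp2 lam th k n) (zm1 lam th k n) th ^ k"
  by (simp_all add: zm1_def zp1_def zm2_def zp2_def split: prod.split)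

lemma z0:
  "zm1 lam th k 0 = lam * th ^ k" "zp1 lam th k 0 = lam"
  "zm2 lam th k 0 = lam * th ^ k" "zp2 lam th k 0 = lam"
  by (simp_all add: zm1_def zp1_def zm2_def zp2_def)

lemma Fk_bounds:
  assumes "0 \<le> x" "0 \<le> y" "0 < th" "th < 1" "lam > 0"
  shows "lam * th ^ k \<le> lam * F x y th ^ k" "lam * F x y th ^ k \<le> lam"
proof -
  note b = F_bounds[OF assms(1-4)]
  have "th ^ k \<le> F x y th ^ k" using b assms by (simp add: power_mono)
  thus "lam * th ^ k \<le> lam * F x y th ^ k" using assms by simp
  have "F x y th ^ k \<le> 1" using b assms by (simp add: power_le_one)
  thus "lam * F x y th ^ k \<le> lam" using assms by simp
qed

lemma Fk_mono:
  assumes "0 \<le> x" "x \<le> x'" "0 \<le> y'" "y' \<le> y" "0 < th" "th < 1" "lam > 0"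
  shows "lam * F x y th ^ k \<le> lam * F x' y' th ^ k"
proof -
  have "th \<le> F x y th" using F_bounds assms by auto
  hence "0 \<le> F x y th" using assms by linarith
  moreover have "F x y th \<le> F x' y' th" using F_mono assms by auto
  ultimately show ?thesis using assms by (simp add: power_mono)
qed

lemma zbounds:
  assumes "0 < th" "th < 1" "lam > 0"
  shows "lam * th ^ k \<le> zm1 lam th k n \<and> zm1 lam th k n \<le> lam \<and>
         lam * th ^ k \<le> zp1 lam th k n \<and> zp1 lam th k n \<le> lam \<and>
         lam * th ^ k \<le> zm2 lam th k n \<and> zm2 lam th k n \<le> lam \<and>
         lam * th ^ k \<le> zp2 lam th k n \<and> zp2 lam th k n \<le> lam"
proof (induction n)
  case 0
  have "th ^ k \<le> 1" using assms by (simp add: power_le_one)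
  then show ?case using assms by (simp add: z0)
next
  case (Suc n)
  have p: "0 \<le> lam * th ^ k" using assms by simp
  have nn: "0 \<le> zm1 lam th k n" "0 \<le> zp1 lam th k n" "0 \<le> zm2 lam th k n" "0 \<le> zp2 lam th k n"
    using Suc p by linarith+
  show ?case unfolding zrec using Fk_bounds[OF _ _ assms(1,2,3)] nn by simp
qed

lemma zmono:
  assumes "0 < th" "th < 1" "lam > 0"
  shows "zm1 lam th k n \<le> zm1 lam th k (Suc n) \<and> zp1 lam th k (Suc n) \<le> zp1 lam th k n \<and>
         zm2 lam th k n \<le> zm2 lam th k (Suc n) \<and> zp2 lam th k (Suc n) \<le> zp2 lam th k n"
proof (induction n)
  case 0
  show ?case using zbounds[OF assms, of k "Suc 0"] by (simp add: z0)
next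
  case (Suc n)
  have p: "0 \<le> lam * th ^ k" using assms by simp
  have nn: "0 \<le> zm1 lam th k n" "0 \<le> zp1 lam th k n" "0 \<le> zm2 lam th k n" "0 \<le> zp2 lam th k n"
           "0 \<le> zm1 lam th k (Suc n)" "0 \<le> zp1 lam th k (Suc n)" "0 \<le> zm2 lam th k (Suc n)" "0 \<le> zp2 lam th k (Suc n)"
    using zbounds[OF assms, of k n] zbounds[OF assms, of k "Suc n"] p by linarith+
  note M = Fk_mono[OF _ _ _ _ assms]
  have "lam * F (zm1 lam th k n) (zp2 lam th k n) th ^ k \<le> lam * F (zm1 lam th k (Suc n)) (zp2 lam th k (Suc n)) th ^ k" by (rule M) (insert nn Suc, linarith+)
  hence "zm1 lam th k (Suc n) \<le> zm1 lam th k (Suc (Suc n))" using zrec(1)[of lam th k n] zrec(1)[of lam th k "Suc n"] by linarith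
  moreover
  have "lam * F (zp1 lam th k (Suc n)) (zm2 lam th k (Suc n)) th ^ k \<le> lam * F (zp1 lam th k n) (zm2 lam th k n) th ^ k" by (rule M) (insert nn Suc, linarith+)
  hence "zp1 lam th k (Suc (Suc n)) \<le> zp1 lam th k (Suc n)" using zrec(2)[of lam th k n] zrec(2)[of lam th k "Suc n"] by linarith
  moreover
  have "lam * F (zm2 lam th k n) (zp1 lam th k n) th ^ k \<le> lam * F (zm2 lam th k (Suc n)) (zp1 lam th k (Suc n)) th ^ k" by (rule M) (insert nn Suc, linarith+)
  hence "zm2 lam th k (Suc n) \<le> zm2 lam th k (Suc (Suc n))" using zrec(3)[of lam th k n] zrec(3)[of lam th k "Suc n"] by linarith
  moreover
  have "lam * F (zp2 lam th k (Suc n)) (zm1 lam th k (Suc n)) th ^ k \<le> lam * F (zp2 lam th k n) (zm1 lam th k n) th ^ k" by (rule M) (insert nn Suc, linarith+)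
  hence "zp2 lam th k (Suc (Suc n)) \<le> zp2 lam th k (Suc n)" using zrec(4)[of lam th k n] zrec(4)[of lam th k "Suc n"] by linarith
  ultimately show ?case by blast
qed

lemma card_succs: "card (succs k i) = k"
proof -
  have "succs k i = (\<lambda>m. m # i) ` {..<k}" unfolding succs_def by auto
  moreover have "inj_on (\<lambda>m. m # i) {..<k}" by (auto simp: inj_on_def)
  ultimately show ?thesis by (simp add: card_image)
qed

lemma finite_succs: "finite (succs k i)"
proof -
  have "succs k i = (\<lambda>m. m # i) ` {..<k}" unfolding succs_def by auto
  thus ?thesis by simp
qed

lemma succs_tree: "i \<in> tree_vertices k \<Longrightarrow> j \<in> succs k i \<Longrightarrow> j \<in> tree_vertices k"
  unfolding succs_def tree_vertices_def by auto


lemma prod_bounds: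
  fixes f :: "'a \<Rightarrow> real"
  assumes "finite S" "\<forall>j\<in>S. lo \<le> f j \<and> f j \<le> hi" "0 \<le> lo"
  shows "lo ^ card S \<le> prod f S \<and> prod f S \<le> hi ^ card S"
proof
  have "prod (\<lambda>_. lo) S \<le> prod f S" by (rule prod_mono) (use assms in auto)
  thus "lo ^ card S \<le> prod f S" by simp
  have "prod f S \<le> prod (\<lambda>_. hi) S" by (rule prod_mono) (use assms in force)
  thus "prod f S \<le> hi ^ card S" by simp
qed

lemma tree_bound:
  assumes th: "0 < th" "th < 1" and lam: "lam > 0"
  and H: "\<forall>i \<in> tree_vertices k. z1 i > 0 \<and> z2 i > 0 \<and>
           z1 i = lam * (\<Prod>j \<in> succs k i. F (z1 j) (z2 j) th) \<and>
           z2 i = lam * (\<Prod>j \<in> succs k i. F (z2 j) (z1 j) th)"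
  shows "\<forall>i \<in> tree_vertices k. zm1 lam th k n \<le> z1 i \<and> z1 i \<le> zp1 lam th k n \<and>
            zm2 lam th k n \<le> z2 i \<and> z2 i \<le> zp2 lam th k n"
proof (induction n)
  case 0
  show ?case
  proof
    fix i assume i: "i \<in> tree_vertices k"
    have pos: "\<forall>j\<in>succs k i. z1 j > 0 \<and> z2 j > 0" using H succs_tree[OF i] by blast
    have "\<forall>j\<in>succs k i. th \<le> F (z1 j) (z2 j) th \<and> F (z1 j) (z2 j) th \<le> 1"
      using pos F_bounds th by (meson less_imp_le)
    from prod_bounds[OF finite_succs this] th
    have A: "th ^ k \<le> (\<Prod>j \<in> succs k i. F (z1 j) (z2 j) th) \<and> (\<Prod>j \<in> succs k i. F (z1 j) (z2 j) th) \<le> 1"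
      by (simp add: card_succs)
    have "\<forall>j\<in>succs k i. th \<le> F (z2 j) (z1 j) th \<and> F (z2 j) (z1 j) th \<le> 1"
      using pos F_bounds th by (meson less_imp_le)
    from prod_bounds[OF finite_succs this] th
    have B: "th ^ k \<le> (\<Prod>j \<in> succs k i. F (z2 j) (z1 j) th) \<and> (\<Prod>j \<in> succs k i. F (z2 j) (z1 j) th) \<le> 1"
      by (simp add: card_succs)
    have e: "z1 i = lam * (\<Prod>j \<in> succs k i. F (z1 j) (z2 j) th)" "z2 i = lam * (\<Prod>j \<in> succs k i. F (z2 j) (z1 j) th)"
      using H i by auto
    show "zm1 lam th k 0 \<le> z1 i \<and> z1 i \<le> zp1 lam th k 0 \<and> zm2 lam th k 0 \<le> z2 i \<and> z2 i \<le> zp2 lam th k 0"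
      unfolding z0 e using A B lam by (simp add: mult_left_mono)
  qed
next
  case (Suc n)
  show ?case
  proof
    fix i assume i: "i \<in> tree_vertices k"
    have pos: "\<forall>j\<in>succs k i. z1 j > 0 \<and> z2 j > 0" using H succs_tree[OF i] by blast
    have ih: "\<forall>j\<in>succs k i. zm1 lam th k n \<le> z1 j \<and> z1 j \<le> zp1 lam th k n \<and>
            zm2 lam th k n \<le> z2 j \<and> z2 j \<le> zp2 lam th k n" using Suc succs_tree[OF i] by blast
    have bd: "lam * th ^ k \<le> zm1 lam th k n" "lam * th ^ k \<le> zm2 lam th k n"
      using zbounds[OF th lam, of k n] by auto
    have p0: "0 \<le> lam * th ^ k" using th lam by simp
    have F0: "0 \<le> F (zm1 lam th k n) (zp2 lam th k n) th" "0 \<le> F (zm2 lam th k n) (zp1 lam th k n) th"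
      using F_bounds(1)[of "zm1 lam th k n" "zp2 lam th k n" th] F_bounds(1)[of "zm2 lam th k n" "zp1 lam th k n" th]
        ih pos bd p0 th by (smt (verit, ccfv_SIG) zbounds[OF th lam, of k n])+
    have "\<forall>j\<in>succs k i. F (zm1 lam th k n) (zp2 lam th k n) th \<le> F (z1 j) (z2 j) th \<and>
                        F (z1 j) (z2 j) th \<le> F (zp1 lam th k n) (zm2 lam th k n) th"
    proof
      fix j assume j: "j \<in> succs k i"
      show "F (zm1 lam th k n) (zp2 lam th k n) th \<le> F (z1 j) (z2 j) th \<and>
                        F (z1 j) (z2 j) th \<le> F (zp1 lam th k n) (zm2 lam th k n) th"
        using F_mono[of "zm1 lam th k n" "z1 j" "z2 j" "zp2 lam th k n" th]
              F_mono[of "z1 j" "zp1 lam th k n" "zm2 lam th k n" "z2 j" th]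
              ih[rule_format, OF j] pos[rule_format, OF j] bd p0 th by auto
    qed
    from prod_bounds[OF finite_succs this F0(1)]
    have A: "F (zm1 lam th k n) (zp2 lam th k n) th ^ k \<le> (\<Prod>j \<in> succs k i. F (z1 j) (z2 j) th) \<and>
             (\<Prod>j \<in> succs k i. F (z1 j) (z2 j) th) \<le> F (zp1 lam th k n) (zm2 lam th k n) th ^ k"
      by (simp add: card_succs)
    have "\<forall>j\<in>succs k i. F (zm2 lam th k n) (zp1 lam th k n) th \<le> F (z2 j) (z1 j) th \<and>
                        F (z2 j) (z1 j) th \<le> F (zp2 lam th k n) (zm1 lam th k n) th"
    proof
      fix j assume j: "j \<in> succs k i"
      show "F (zm2 lam th k n) (zp1 lam th k n) th \<le> F (z2 j) (z1 j) th \<and>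
                        F (z2 j) (z1 j) th \<le> F (zp2 lam th k n) (zm1 lam th k n) th"
        using F_mono[of "zm2 lam th k n" "z2 j" "z1 j" "zp1 lam th k n" th]
              F_mono[of "z2 j" "zp2 lam th k n" "zm1 lam th k n" "z1 j" th]
              ih[rule_format, OF j] pos[rule_format, OF j] bd p0 th by auto
    qed
    from prod_bounds[OF finite_succs this F0(2)]
    have B: "F (zm2 lam th k n) (zp1 lam th k n) th ^ k \<le> (\<Prod>j \<in> succs k i. F (z2 j) (z1 j) th) \<and>
             (\<Prod>j \<in> succs k i. F (z2 j) (z1 j) th) \<le> F (zp2 lam th k n) (zm1 lam th k n) th ^ k"
      by (simp add: card_succs)
    have e: "z1 i = lam * (\<Prod>j \<in> succs k i. F (z1 j) (z2 j) th)" "z2 i = lam * (\<Prod>j \<in> succs k i. F (z2 j) (z1 j) th)"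
      using H i by auto
    show "zm1 lam th k (Suc n) \<le> z1 i \<and> z1 i \<le> zp1 lam th k (Suc n) \<and> zm2 lam th k (Suc n) \<le> z2 i \<and> z2 i \<le> zp2 lam th k (Suc n)"
      unfolding zrec e using A B lam by (simp add: mult_left_mono)
  qed
qed


lemma fix_lim:
  assumes X: "X \<longlonglongrightarrow> a" and Y: "Y \<longlonglongrightarrow> d" and a: "a > 0" and d: "d > 0"
  and rec: "\<And>n. X (Suc n) = lam * F (X n) (Y n) th ^ k"
  shows "a = lam * F a d th ^ k"
proof -
  have "(\<lambda>n. lam * F (X n) (Y n) th ^ k) \<longlonglongrightarrow> lam * F a d th ^ k"
    unfolding F_def using a d by (intro tendsto_intros X Y) auto
  moreover have "(\<lambda>n. X (Suc n)) \<longlonglongrightarrow> a" using X by (rule LIMSEQ_Suc)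
  ultimately show ?thesis unfolding rec using LIMSEQ_unique by blast
qed

theorem mainTheorem12:
  fixes k :: nat and lam \<theta> :: real
  assumes "k \<ge> 1" and "lam > 0" and "0 < \<theta>" and "\<theta> < 1"
  shows "\<exists>a b c d.
     (\<lambda>n. zm1 lam \<theta> k n) \<longlonglongrightarrow> a \<and> (\<lambda>n. zp1 lam \<theta> k n) \<longlonglongrightarrow> b \<and>
     (\<lambda>n. zm2 lam \<theta> k n) \<longlonglongrightarrow> c \<and> (\<lambda>n. zp2 lam \<theta> k n) \<longlonglongrightarrow> d \<and>
     a = lam * F a d \<theta> ^ k \<and> b = lam * F b c \<theta> ^ k \<and>
     c = lam * F c b \<theta> ^ k \<and> d = lam * F d a \<theta> ^ k \<and>
     (\<forall>z1 z2 :: nat list \<Rightarrow> real.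
        (\<forall>i \<in> tree_vertices k. z1 i > 0 \<and> z2 i > 0 \<and>
           z1 i = lam * (\<Prod>j \<in> succs k i. F (z1 j) (z2 j) \<theta>) \<and>
           z2 i = lam * (\<Prod>j \<in> succs k i. F (z2 j) (z1 j) \<theta>))
        \<longrightarrow> (\<forall>i \<in> tree_vertices k. a \<le> z1 i \<and> z1 i \<le> b \<and> c \<le> z2 i \<and> z2 i \<le> d))"
proof -
  note th = assms(3,4) and lam = assms(2)
  note B = zbounds[OF th lam, of k] and M = zmono[OF th lam, of k]
  have p: "lam * \<theta> ^ k > 0" using th lam by simp
  obtain a where a: "(\<lambda>n. zm1 lam \<theta> k n) \<longlonglongrightarrow> a" "\<forall>i. zm1 lam \<theta> k i \<le> a"
    using incseq_convergent[of "\<lambda>n. zm1 lam \<theta> k n" lam] M B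
    by (metis incseq_SucI)
  obtain c where c: "(\<lambda>n. zm2 lam \<theta> k n) \<longlonglongrightarrow> c" "\<forall>i. zm2 lam \<theta> k i \<le> c"
    using incseq_convergent[of "\<lambda>n. zm2 lam \<theta> k n" lam] M B
    by (metis incseq_SucI)
  obtain b where b: "(\<lambda>n. zp1 lam \<theta> k n) \<longlonglongrightarrow> b" "\<forall>i. b \<le> zp1 lam \<theta> k i"
    using decseq_convergent[of "\<lambda>n. zp1 lam \<theta> k n" "lam * \<theta> ^ k"] M B
    by (metis decseq_SucI)
  obtain d where d: "(\<lambda>n. zp2 lam \<theta> k n) \<longlonglongrightarrow> d" "\<forall>i. d \<le> zp2 lam \<theta> k i"
    using decseq_convergent[of "\<lambda>n. zp2 lam \<theta> k n" "lam * \<theta> ^ k"] M B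
    by (metis decseq_SucI)
  have ap: "a > 0" using a(2)[rule_format, of 0] B[of 0] p by linarith
  have cp: "c > 0" using c(2)[rule_format, of 0] B[of 0] p by linarith
  have bp: "b > 0" by (rule less_le_trans[OF p], rule LIMSEQ_le_const[OF b(1)]) (use B in auto)
  have dp: "d > 0" by (rule less_le_trans[OF p], rule LIMSEQ_le_const[OF d(1)]) (use B in auto)
  have f1: "a = lam * F a d \<theta> ^ k" by (rule fix_lim[OF a(1) d(1) ap dp zrec(1)])
  have f2: "b = lam * F b c \<theta> ^ k" by (rule fix_lim[OF b(1) c(1) bp cp zrec(2)])
  have f3: "c = lam * F c b \<theta> ^ k" by (rule fix_lim[OF c(1) b(1) cp bp zrec(3)])
  have f4: "d = lam * F d a \<theta> ^ k" by (rule fix_lim[OF d(1) a(1) dp ap zrec(4)])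
  have T: "\<forall>i \<in> tree_vertices k. a \<le> z1 i \<and> z1 i \<le> b \<and> c \<le> z2 i \<and> z2 i \<le> d"
    if H: "\<forall>i \<in> tree_vertices k. z1 i > 0 \<and> z2 i > 0 \<and>
           z1 i = lam * (\<Prod>j \<in> succs k i. F (z1 j) (z2 j) \<theta>) \<and>
           z2 i = lam * (\<Prod>j \<in> succs k i. F (z2 j) (z1 j) \<theta>)" for z1 z2 :: "nat list \<Rightarrow> real"
  proof
    fix i assume i: "i \<in> tree_vertices k"
    note tb = tree_bound[OF th lam H, rule_format, OF i]
    have "a \<le> z1 i" by (rule LIMSEQ_le_const2[OF a(1)]) (use tb in auto)
    moreover have "z1 i \<le> b" by (rule LIMSEQ_le_const[OF b(1)]) (use tb in auto)
    moreover have "c \<le> z2 i" by (rule LIMSEQ_le_const2[OF c(1)]) (use tb in auto)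
    moreover have "z2 i \<le> d" by (rule LIMSEQ_le_const[OF d(1)]) (use tb in auto)
    ultimately show "a \<le> z1 i \<and> z1 i \<le> b \<and> c \<le> z2 i \<and> z2 i \<le> d" by blast
  qed
  show ?thesis using a b c d f1 f2 f3 f4 T by blast
qed

end
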